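(* Let $K,m,n$ be integers with $n\ge1$ and $0\le m$, $2m+2\le K$, and let $a_j^2=\frac{j(K-j+1)}{4n^2}$. Define $r_1^2,r_3^2,\dots$ by $r_{2\ell+1}^2=a_{2\ell+2}^2+a_{2\ell+1}^2\prod_{j=1}^{\ell}\frac{a_{2j-1}^2}{r_{2j-1}^2}$ for $\ell\ge0$. For $k\ge 0$ set $$A_k^{[2m+1]}=-\frac{a_{2m+1-2(k-1)}^2}{a_{2m+2-2(k-1)}^2},\qquad B_k^{[2m+1]}=1+\frac{a_{2m+1-2k}^2}{a_{2m+2-2k}^2}=1-A_{k+1}^{[2m+1]},$$ and define $\mathcal R_k^{[2m+1]},\mathcal S_k^{[2m+1]}$ by $\mathcal R_{-1}^{[2m+1]}=1$, $\mathcal S_{-1}^{[2m+1]}=0$, $\mathcal R_0^{[2m+1]}=B_0^{[2m+1]}$, $\mathcal S_0^{[2m+1]}=1$ and, for $k\ge1$, $$\mathcal R_k^{[2m+1]}=B_k^{[2m+1]}\mathcal R_{k-1}^{[2m+1]}+A_k^{[2m+1]}\mathcal R_{k-2}^{[2m+1]},\qquad \mathcal S_k^{[2m+1]}=B_k^{[2m+1]}\mathcal S_{k-1}^{[2m+1]}+A_k^{[2m+1]}\mathcal S_{k-2}^{[2m+1]}.$$ Then $$\frac{r_{2m+1}^2}{a_{2m+2}^2}=\frac{\mathcal R_m^{[2m+1]}}{\mathcal S_m^{[2m+1]}}.$$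
   Context: The $a_j$ are the (off-diagonal) Jacobi recurrence coefficients of the orthonormal Krawtchouk polynomials with parameter $p=1/2$ on the lattice $\{i/n: i=-K/2,\dots,K/2\}$, i.e. $a_j^2=j(K-j+1)p(1-p)/n^2$ with $p=1/2$. *)

theory Defs
  imports Complex_Main
begin

definition asq :: "nat \<Rightarrow> nat \<Rightarrow> nat \<Rightarrow> real" where
  "asq K n j = real j * (real K - real j + 1) / (4 * (real n)^2)"

text \<open>rlist K n l = [r_1^2, r_3^2, ..., r_{2l+1}^2]; entry i is r_{2i+1}^2, with
  r_{2l+1}^2 = a_{2l+2}^2 + a_{2l+1}^2 * prod_{j=1}^{l} a_{2j-1}^2 / r_{2j-1}^2.\<close>
fun rlist :: "nat \<Rightarrow> nat \<Rightarrow> nat \<Rightarrow> real list" where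
  "rlist K n 0 = [asq K n 2 + asq K n 1]"
| "rlist K n (Suc l) = rlist K n l @
     [asq K n (2 * Suc l + 2) + asq K n (2 * Suc l + 1) *
        (\<Prod>j\<in>{1..Suc l}. asq K n (2 * j - 1) / (rlist K n l ! (j - 1)))]"

definition rsq :: "nat \<Rightarrow> nat \<Rightarrow> nat \<Rightarrow> real" where
  "rsq K n l = rlist K n l ! l"

text \<open>A_k^{[2m+1]} = - a_{2m+1-2(k-1)}^2 / a_{2m+2-2(k-1)}^2\<close>
definition Acoef :: "nat \<Rightarrow> nat \<Rightarrow> nat \<Rightarrow> nat \<Rightarrow> real" where
  "Acoef K n m k = - asq K n (2 * m + 3 - 2 * k) / asq K n (2 * m + 4 - 2 * k)"

definition Bcoef :: "nat \<Rightarrow> nat \<Rightarrow> nat \<Rightarrow> nat \<Rightarrow> real" where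
  "Bcoef K n m k = 1 + asq K n (2 * m + 1 - 2 * k) / asq K n (2 * m + 2 - 2 * k)"

text \<open>Three-term recurrence: value at index k (k >= 0) given X_{-1} = x, X_0 = y,
  X_k = B_k X_{k-1} + A_k X_{k-2} for k >= 1.\<close>
fun rec3 :: "(nat \<Rightarrow> real) \<Rightarrow> (nat \<Rightarrow> real) \<Rightarrow> real \<Rightarrow> real \<Rightarrow> nat \<Rightarrow> real" where
  "rec3 A B x y 0 = y"
| "rec3 A B x y (Suc 0) = B 1 * y + A 1 * x"
| "rec3 A B x y (Suc (Suc k)) =
     B (Suc (Suc k)) * rec3 A B x y (Suc k) + A (Suc (Suc k)) * rec3 A B x y k"

definition Rcal :: "nat \<Rightarrow> nat \<Rightarrow> nat \<Rightarrow> nat \<Rightarrow> real" where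
  "Rcal K n m k = rec3 (Acoef K n m) (Bcoef K n m) 1 (Bcoef K n m 0) k"

definition Scal :: "nat \<Rightarrow> nat \<Rightarrow> nat \<Rightarrow> nat \<Rightarrow> real" where
  "Scal K n m k = rec3 (Acoef K n m) (Bcoef K n m) 0 1 k"

end

theory Submission
  imports Defs
begin

lemma rlist_len: "length (rlist K n l) = Suc l"
  by (induction l) auto

lemma rlist_prefix: "i \<le> l \<Longrightarrow> rlist K n (l + d) ! i = rlist K n l ! i"
proof (induction d)
  case 0 then show ?case by simp
next
  case (Suc d)
  have "rlist K n (l + Suc d) ! i = rlist K n (l + d) ! i"
    using Suc.prems by (simp add: nth_append rlist_len)
  then show ?case using Suc by simp
qed

definition P :: "nat \<Rightarrow> nat \<Rightarrow> nat \<Rightarrow> real" where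
  "P K n l = (\<Prod>j\<in>{1..l}. asq K n (2 * j - 1) / rsq K n (j - 1))"

lemma P_Suc: "P K n (Suc l) = P K n l * (asq K n (2 * l + 1) / rsq K n l)"
  unfolding P_def by (simp)

lemma rsq_P: "rsq K n l = asq K n (2 * l + 2) + asq K n (2 * l + 1) * P K n l"
proof (cases l)
  case 0 then show ?thesis by (simp add: rsq_def P_def numeral_2_eq_2)
next
  case (Suc l')
  have eq: "\<And>j. 1 \<le> j \<Longrightarrow> j \<le> Suc l' \<Longrightarrow> rlist K n l' ! (j - 1) = rsq K n (j - 1)"
  proof -
    fix j assume "1 \<le> j" "j \<le> Suc l'"
    then have "j - 1 \<le> l'" by auto
    then have "rlist K n l' ! (j - 1) = rlist K n (j - 1) ! (j - 1)"
      using rlist_prefix[of "j - 1" "j - 1" K n "l' - (j - 1)"] by simp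
    then show "rlist K n l' ! (j - 1) = rsq K n (j - 1)" by (simp add: rsq_def)
  qed
  have "rsq K n (Suc l') = asq K n (2 * Suc l' + 2) + asq K n (2 * Suc l' + 1) *
        (\<Prod>j\<in>{1..Suc l'}. asq K n (2 * j - 1) / (rlist K n l' ! (j - 1)))"
    by (simp add: rsq_def nth_append rlist_len)
  also have "(\<Prod>j\<in>{1..Suc l'}. asq K n (2 * j - 1) / (rlist K n l' ! (j - 1)))
      = P K n (Suc l')"
    unfolding P_def by (rule prod.cong[OF refl]) (metis atLeastAtMost_iff eq)
  finally show ?thesis using Suc by simp
qed

lemma asq_pos: "1 \<le> n \<Longrightarrow> 1 \<le> j \<Longrightarrow> j \<le> K \<Longrightarrow> asq K n j > 0"
  unfolding asq_def by (auto intro!: divide_pos_pos mult_pos_pos)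

lemma pos: "1 \<le> n \<Longrightarrow> 2 * l + 2 \<le> K \<Longrightarrow> P K n l > 0 \<and> rsq K n l > 0"
proof (induction l)
  case 0 then show ?case
    using asq_pos[of n 1 K] asq_pos[of n 2 K] by (simp add: P_def rsq_P[of K n 0] numeral_2_eq_2)
next
  case (Suc l)
  then have h: "P K n l > 0" "rsq K n l > 0" by auto
  have "P K n (Suc l) > 0" using h asq_pos[of n "2*l+1" K] Suc.prems
    by (simp add: P_Suc)
  moreover have "rsq K n (Suc l) > 0" using calculation asq_pos[of n "2*Suc l+1" K]
      asq_pos[of n "2*Suc l+2" K] Suc.prems
    by (simp only: rsq_P) (simp add: add_pos_pos)
  ultimately show ?case by simp
qed

lemma x_step:
  assumes "1 \<le> n" "2 * Suc l + 2 \<le> K"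
  shows "rsq K n (Suc l) / asq K n (2 * Suc l + 2) =
    1 + asq K n (2 * Suc l + 1) / asq K n (2 * Suc l + 2)
    - (asq K n (2 * Suc l + 1) / asq K n (2 * Suc l + 2)) / (rsq K n l / asq K n (2 * l + 2))"
proof -
  have r: "rsq K n l > 0" using pos[of n l K] assms by simp
  have b4: "asq K n (2 * Suc l + 2) > 0" using asq_pos[of n _ K] assms by simp
  have b2: "asq K n (2 * l + 2) > 0" using asq_pos[of n _ K] assms by simp
  have rl: "rsq K n l = asq K n (2 * l + 2) + asq K n (2 * l + 1) * P K n l" by (rule rsq_P)
  have alg: "\<And>b1 b2 b3 b4 p r :: real. r > 0 \<Longrightarrow> b4 > 0 \<Longrightarrow> b2 > 0 \<Longrightarrow> r = b2 + b1 * p \<Longrightarrow>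
     (b4 + b3 * (p * (b1 / r))) / b4 = 1 + b3 / b4 - (b3 / b4) / (r / b2)"
  proof -
    fix b1 b2 b3 b4 p r :: real
    assume h: "r > 0" "b4 > 0" "b2 > 0" "r = b2 + b1 * p"
    have e1: "(b4 + b3 * (p * (b1 / r))) / b4 = 1 + b3 * (b1 * p) / (b4 * r)"
      using h(1,2) by (simp add: field_simps)
    have e2: "1 + b3 / b4 - (b3 / b4) / (r / b2) = 1 + b3 * (r - b2) / (b4 * r)"
      using h(1,2,3) by (simp add: field_simps)
    have e3: "r - b2 = b1 * p" using h(4) by simp
    show "(b4 + b3 * (p * (b1 / r))) / b4 = 1 + b3 / b4 - (b3 / b4) / (r / b2)"
      unfolding e1 e2 e3 ..
  qed
  show ?thesis
    apply (simp only: rsq_P[of K n "Suc l"] P_Suc)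
    by (rule alg[OF r b4 b2 rl])
qed

fun Fs :: "(nat \<Rightarrow> real) \<Rightarrow> (nat \<Rightarrow> real) \<Rightarrow> real \<Rightarrow> real \<Rightarrow> nat \<Rightarrow> real" where
  "Fs A B x y 0 = x"
| "Fs A B x y (Suc i) = rec3 A B x y i"

lemma Fs_rec: "Fs A B x y (Suc (Suc i)) = B (Suc i) * Fs A B x y (Suc i) + A (Suc i) * Fs A B x y i"
  by (cases i) auto

lemma cf_G:
  fixes F A B y :: "nat \<Rightarrow> real"
  assumes rec: "\<And>i. F (Suc (Suc i)) = B (Suc i) * F (Suc i) + A (Suc i) * F i"
    and ty: "\<And>j. j < m \<Longrightarrow> y j = B j + A (Suc j) / y (Suc j)"
    and nz: "\<And>j. j \<le> m \<Longrightarrow> y j \<noteq> 0"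
  shows "j < m \<Longrightarrow> y (Suc j) * F (Suc j) + A (Suc j) * F j
     = (\<Prod>i\<in>{2..Suc j}. y i) * (y 1 * F 1 + A 1 * F 0)"
proof (induction j)
  case 0 then show ?case by simp
next
  case (Suc j)
  have y2: "y (Suc (Suc j)) \<noteq> 0" using nz Suc.prems by simp
  have "y (Suc j) * F (Suc j) + A (Suc j) * F j
      = F (Suc (Suc j)) + A (Suc (Suc j)) * F (Suc j) / y (Suc (Suc j))"
    using ty[of "Suc j"] Suc.prems rec[of j] by (simp add: algebra_simps add_divide_distrib)
  then have "y (Suc (Suc j)) * F (Suc (Suc j)) + A (Suc (Suc j)) * F (Suc j)
      = y (Suc (Suc j)) * (y (Suc j) * F (Suc j) + A (Suc j) * F j)"
    using y2 by (simp add: field_simps)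
  also have "\<dots> = y (Suc (Suc j)) * ((\<Prod>i\<in>{2..Suc j}. y i) * (y 1 * F 1 + A 1 * F 0))"
    using Suc by simp
  also have "\<dots> = (\<Prod>i\<in>{2..Suc (Suc j)}. y i) * (y 1 * F 1 + A 1 * F 0)"
    by (simp)
  finally show ?case .
qed

lemma cf:
  fixes A B y :: "nat \<Rightarrow> real"
  assumes ty: "\<And>j. j < m \<Longrightarrow> y j = B j + A (Suc j) / y (Suc j)"
    and nz: "\<And>j. j \<le> m \<Longrightarrow> y j \<noteq> 0"
    and ym: "y m = B m"
  shows "y 0 = rec3 A B 1 (B 0) m / rec3 A B 0 1 m"
proof (cases m)
  case 0 then show ?thesis using ym by simp
next
  case (Suc m')
  have gen: "Fs A B x z (Suc m) = (\<Prod>i\<in>{2..m}. y i) * (y 1 * Fs A B x z 1 + A 1 * Fs A B x z 0)"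
    for x z
  proof -
    have "Fs A B x z (Suc m) = y m * Fs A B x z m + A m * Fs A B x z m'"
      using Fs_rec[of A B x z m'] ym Suc by simp
    also have "\<dots> = (\<Prod>i\<in>{2..m}. y i) * (y 1 * Fs A B x z 1 + A 1 * Fs A B x z 0)"
      using cf_G[of "Fs A B x z" B A m y m', OF Fs_rec ty nz] Suc by simp
    finally show ?thesis .
  qed
  have y0: "y 0 = B 0 + A 1 / y 1" using ty[of 0] Suc by simp
  have y1: "y 1 \<noteq> 0" using nz Suc by simp
  have pnz: "(\<Prod>i\<in>{2..m}. y i) \<noteq> 0" using nz by (auto simp: prod_zero_iff)
  have R: "rec3 A B 1 (B 0) m = (\<Prod>i\<in>{2..m}. y i) * (y 1 * y 0)"
    using gen[of 1 "B 0"] y0 y1 by (simp add: field_simps)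
  have S: "rec3 A B 0 1 m = (\<Prod>i\<in>{2..m}. y i) * y 1"
    using gen[of 0 1] by simp
  show ?thesis using R S pnz y1 by simp
qed

theorem lemma1:
  fixes K m n :: nat
  assumes "n \<ge> 1" and "2 * m + 2 \<le> K"
  shows "rsq K n m / asq K n (2 * m + 2) = Rcal K n m m / Scal K n m m"
proof -
  define y where "y j = rsq K n (m - j) / asq K n (2 * (m - j) + 2)" for j
  have h1: "y 0 = rec3 (Acoef K n m) (Bcoef K n m) 1 (Bcoef K n m 0) m / rec3 (Acoef K n m) (Bcoef K n m) 0 1 m"
  proof (rule cf)
    fix j assume j: "j < m"
    then obtain l where l: "m - j = Suc l" "m - Suc j = l"
      by (metis Suc_diff_Suc)
    have i1: "2 * m + 1 - 2 * j = 2 * Suc l + 1" "2 * m + 2 - 2 * j = 2 * Suc l + 2"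
      "2 * m + 3 - 2 * Suc j = 2 * Suc l + 1" "2 * m + 4 - 2 * Suc j = 2 * Suc l + 2"
      using l j by auto
    show "y j = Bcoef K n m j + Acoef K n m (Suc j) / y (Suc j)"
      unfolding y_def Bcoef_def Acoef_def i1 l
      using x_step[of n l K] assms l by simp
  next
    fix j assume "j \<le> m"
    then have jj: "2 * (m - j) + 2 \<le> K" using assms by linarith
    then show "y j \<noteq> 0" unfolding y_def
      using pos[of n "m - j" K] asq_pos[of n "2 * (m - j) + 2" K] assms by auto
  next
    show "y m = Bcoef K n m m"
      unfolding y_def Bcoef_def using asq_pos[of n 2 K] assms
      by (simp add: rsq_P[of K n 0] P_def field_simps numeral_2_eq_2)
  qed
  have h2: "y 0 = rsq K n m / asq K n (2 * m + 2)" unfolding y_def by simp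
  show ?thesis unfolding Rcal_def Scal_def using trans[OF sym[OF h2] h1] .
qed

end
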